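(* Let $k\le n\le m<\phi(k)$. Then the value in $U_q^+(\mathfrak{sp}_{2n})$ of the bracketed word $[y_k\,x_n\,x_{n+1}\cdots x_m]$, where $y_k=v[k,n-1]=[[\dots[x_k,x_{k+1}],\dots],x_{n-1}]$, does not depend on the arrangement of the (skew) brackets on the sequence $y_k,x_n,x_{n+1},\dots,x_m$.
   Context: Let $\mathbf{k}$ be a field, $G$ an abelian group, $n\ge2$, $X=\{x_1,\dots,x_n\}$, $g_i\in G$, characters $\chi^i:G\to\mathbf{k}^*$, $p_{ij}=\chi^i(g_j)$; for homogeneous $u,v$, $p(u,v)=\chi^u(g_v)$ (obtained by replacing $x_i$ by $g_i$, resp. $\chi^i$). $G\langle X\rangle$: skew group algebra with $x_ig=\chi^i(g)gx_i$; skew bracket $[u,v]=uv-p(u,v)vu$. Fix $q\in\mathbf{k}^*$, $q^3\ne1$, $q\ne-1$; assume $p_{ii}=q$ ($i<n$), $p_{nn}=q^2$, $p_{i,i-1}p_{i-1,i}=q^{-1}$ ($1<i<n$), $p_{n-1,n}p_{n,n-1}=q^{-2}$, $p_{ij}p_{ji}=1$ ($j>i+1$). $U_q^+(\mathfrak{sp}_{2n})$ is the quotient of $G\langle X\rangle$ by the ideal generated by $[x_i,[x_i,x_{i+1}]]$, $[[x_i,x_{i+1}],x_{i+1}]$ ($1\le i<n-1$), $[x_i,x_j]$ ($j>i+1$), $[[x_{n-1},x_n],x_n]$, $[x_{n-1},[x_{n-1},[x_{n-1},x_n]]]$. For $n<i<2n$, $x_i:=x_{2n-i}$; $\phi(i)=2n-i$.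 *)

theory Defs
  imports Main
begin

text \<open>Noncommutative polynomials k<X> over letters x_i (indexed by nat), represented as
  coefficient functions on words. Only finitely supported ones are genuine polynomials.\<close>

type_synonym 'k ncpoly = "nat list \<Rightarrow> 'k"

definition fin_supp :: "'k::zero ncpoly \<Rightarrow> bool" where
  "fin_supp f \<longleftrightarrow> finite {w. f w \<noteq> 0}"

definition mono :: "nat list \<Rightarrow> 'k::{zero,one} ncpoly" where
  "mono u = (\<lambda>w. if w = u then 1 else 0)"

definition pmul :: "'k::semiring_0 ncpoly \<Rightarrow> 'k ncpoly \<Rightarrow> 'k ncpoly" where
  "pmul f h = (\<lambda>w. \<Sum>i\<le>length w. f (take i w) * h (drop i w))"

text \<open>Binary trees: bracketings.\<close>
datatype 'a btree = Lf 'a | Br "'a btree" "'a btree"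

fun leaves :: "'a btree \<Rightarrow> 'a list" where
  "leaves (Lf a) = [a]"
| "leaves (Br s t) = leaves s @ leaves t"

fun subst_tree :: "'a btree btree \<Rightarrow> 'a btree" where
  "subst_tree (Lf t) = t"
| "subst_tree (Br s t) = Br (subst_tree s) (subst_tree t)"

text \<open>p(u,v) = chi^u(g_v) for words u v (degrees): chi^u is the product of the characters
  of the letters of u, g_v the product (written additively) of the group elements of v.\<close>
definition pp :: "(nat \<Rightarrow> 'g::ab_group_add \<Rightarrow> 'k::field) \<Rightarrow> (nat \<Rightarrow> 'g) \<Rightarrow> nat list \<Rightarrow> nat list \<Rightarrow> 'k" where
  "pp chi g u v = (\<Prod>i\<leftarrow>u. chi i (\<Sum>j\<leftarrow>v. g j))"

text \<open>Value of a bracketed word (leaves are letter indices) with skew brackets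
  [u,v] = uv - p(u,v) vu.\<close>
fun bval :: "(nat \<Rightarrow> 'g::ab_group_add \<Rightarrow> 'k::field) \<Rightarrow> (nat \<Rightarrow> 'g) \<Rightarrow> nat btree \<Rightarrow> 'k ncpoly" where
  "bval chi g (Lf i) = mono [i]"
| "bval chi g (Br s t) =
     (\<lambda>w. pmul (bval chi g s) (bval chi g t) w
          - pp chi g (leaves s) (leaves t) * pmul (bval chi g t) (bval chi g s) w)"

inductive_set ideal_gen :: "'k::comm_ring ncpoly set \<Rightarrow> 'k ncpoly set" for R where
  zero: "(\<lambda>_. 0) \<in> ideal_gen R"
| gen: "r \<in> R \<Longrightarrow> fin_supp a \<Longrightarrow> fin_supp b \<Longrightarrow> pmul (pmul a r) b \<in> ideal_gen R"
| add: "x \<in> ideal_gen R \<Longrightarrow> y \<in> ideal_gen R \<Longrightarrow> (\<lambda>w. x w + y w) \<in> ideal_gen R"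

definition sp_rel_trees :: "nat \<Rightarrow> nat btree set" where
  "sp_rel_trees n =
     {Br (Lf i) (Br (Lf i) (Lf (i+1))) | i. 1 \<le> i \<and> i < n - 1}
   \<union> {Br (Br (Lf i) (Lf (i+1))) (Lf (i+1)) | i. 1 \<le> i \<and> i < n - 1}
   \<union> {Br (Lf i) (Lf j) | i j. 1 \<le> i \<and> i + 1 < j \<and> j \<le> n}
   \<union> {Br (Br (Lf (n-1)) (Lf n)) (Lf n),
      Br (Lf (n-1)) (Br (Lf (n-1)) (Br (Lf (n-1)) (Lf n)))}"

definition Uq_ideal :: "(nat \<Rightarrow> 'g::ab_group_add \<Rightarrow> 'k::field) \<Rightarrow> (nat \<Rightarrow> 'g) \<Rightarrow> nat \<Rightarrow> 'k ncpoly set" where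
  "Uq_ideal chi g n = ideal_gen (bval chi g ` sp_rel_trees n)"

text \<open>x_i := x_{2n-i} for n < i < 2n.\<close>
definition letter :: "nat \<Rightarrow> nat \<Rightarrow> nat" where
  "letter n i = (if i \<le> n then i else 2*n - i)"

definition phi :: "nat \<Rightarrow> nat \<Rightarrow> nat" where
  "phi n i = 2*n - i"

text \<open>v[k,n-1] = [[...[x_k,x_{k+1}],...],x_{n-1}] (left-normed), for k < n.\<close>
definition v_tree :: "nat \<Rightarrow> nat \<Rightarrow> nat btree" where
  "v_tree k l = foldl (\<lambda>t i. Br t (Lf i)) (Lf k) [k+1..<l+1]"

text \<open>The sequence y_k, x_n, x_{n+1}, ..., x_m (y_k omitted when k = n, as v[n,n-1] is empty).\<close>
definition items :: "nat \<Rightarrow> nat \<Rightarrow> nat \<Rightarrow> nat btree list" where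
  "items n k m = (if k < n then [v_tree k (n-1)] else [])
                 @ map (\<lambda>i. Lf (letter n i)) [n..<m+1]"

end

theory Submission
  imports Defs
begin



lemma fin_supp_mono: "fin_supp (mono u :: 'k::{zero,one} ncpoly)"
  unfolding fin_supp_def mono_def by (rule finite_subset[of _ "{u}"]) auto

lemma fin_supp_zero: "fin_supp (\<lambda>_. 0)"
  unfolding fin_supp_def by simp

lemma fin_supp_add: "fin_supp f \<Longrightarrow> fin_supp h \<Longrightarrow> fin_supp (\<lambda>w. f w + h w :: 'k::comm_monoid_add)"
  unfolding fin_supp_def
  by (rule finite_subset[of _ "{w. f w \<noteq> 0} \<union> {w. h w \<noteq> 0}"]) auto

lemma fin_supp_uminus: "fin_supp f \<Longrightarrow> fin_supp (\<lambda>w. - f w :: 'k::ab_group_add)"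
  unfolding fin_supp_def by simp

lemma fin_supp_diff: "fin_supp f \<Longrightarrow> fin_supp h \<Longrightarrow> fin_supp (\<lambda>w. f w - h w :: 'k::ab_group_add)"
  unfolding fin_supp_def
  by (rule finite_subset[of _ "{w. f w \<noteq> 0} \<union> {w. h w \<noteq> 0}"]) auto

lemma fin_supp_smult: "fin_supp f \<Longrightarrow> fin_supp (\<lambda>w. c * f w :: 'k::semiring_0)"
  unfolding fin_supp_def
  by (rule finite_subset[of _ "{w. f w \<noteq> 0}"]) auto

lemma fin_supp_pmul:
  assumes "fin_supp f" "fin_supp h"
  shows "fin_supp (pmul f h)"
proof -
  let ?S = "(\<lambda>(u,v). u @ v) ` ({w. f w \<noteq> 0} \<times> {w. h w \<noteq> 0})"
  have "{w. pmul f h w \<noteq> 0} \<subseteq> ?S"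
  proof
    fix w assume "w \<in> {w. pmul f h w \<noteq> 0}"
    then obtain i where "f (take i w) * h (drop i w) \<noteq> 0"
      unfolding pmul_def by (auto elim: sum.not_neutral_contains_not_neutral)
    then show "w \<in> ?S"
      by (auto intro!: image_eqI[of _ _ "(take i w, drop i w)"])
  qed
  moreover have "finite ?S" using assms unfolding fin_supp_def by simp
  ultimately show ?thesis unfolding fin_supp_def by (rule finite_subset)
qed

lemma pmul_assoc:
  fixes f g h :: "'k::semiring_0 ncpoly"
  shows "pmul (pmul f g) h = pmul f (pmul g h)"
proof
  fix w :: "nat list"
  let ?L = "length w"
  define G where "G = (\<lambda>j i. f (take j w) * g (take i (drop j w)) * h (drop (j+i) w))"
  have "pmul (pmul f g) h w = (\<Sum>k\<le>?L. \<Sum>j\<le>k. G j (k - j))"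
    unfolding pmul_def G_def
    by (auto simp: sum_distrib_right min_def take_drop intro!: sum.cong)
  also have "\<dots> = (\<Sum>(j,i)\<in>{(j,i). j+i \<le> ?L}. G j i)"
    by (rule sum.triangle_reindex_eq[symmetric])
  also have "{(j,i). j+i \<le> ?L} = Sigma {..?L} (\<lambda>j. {..?L - j})" by auto
  also have "(\<Sum>(j,i)\<in>Sigma {..?L} (\<lambda>j. {..?L - j}). G j i) = (\<Sum>j\<le>?L. \<Sum>i\<le>?L-j. G j i)"
    by (rule sum.Sigma[symmetric]) auto
  also have "\<dots> = pmul f (pmul g h) w"
    unfolding pmul_def G_def
    by (auto simp: sum_distrib_left mult.assoc add.commute intro!: sum.cong)
  finally show "pmul (pmul f g) h w = pmul f (pmul g h) w" .
qed

lemma pmul_mono_Nil_left: "pmul (mono []) f = (f :: 'k::semiring_1 ncpoly)"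
proof
  fix w
  have "pmul (mono []) f w = (\<Sum>i\<le>length w. if i = 0 then f w else 0)"
    unfolding pmul_def mono_def by (rule sum.cong) auto
  then show "pmul (mono []) f w = f w" by simp
qed

lemma pmul_mono_Nil_right: "pmul f (mono []) = (f :: 'k::semiring_1 ncpoly)"
proof
  fix w
  have "pmul f (mono []) w = (\<Sum>i\<le>length w. if i = length w then f w else 0)"
    unfolding pmul_def mono_def by (rule sum.cong) auto
  then show "pmul f (mono []) w = f w" by simp
qed

lemma pmul_mono_mono: "pmul (mono u) (mono v) = (mono (u @ v) :: 'k::semiring_1 ncpoly)"
proof
  fix w
  have "pmul (mono u :: 'k ncpoly) (mono v) w = (\<Sum>i\<le>length w. if i = length u \<and> w = u @ v then 1 else 0)"
    unfolding pmul_def mono_def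
    by (intro sum.cong refl) (auto simp: min_def)
  then show "pmul (mono u) (mono v) w = (mono (u @ v) :: 'k ncpoly) w"
    unfolding mono_def by (auto simp: sum.delta)
qed




typedef (overloaded) 'k fp = "{f :: 'k::comm_ring_1 ncpoly. fin_supp f}"
  morphisms rep Abs_fp by (rule exI[of _ "\<lambda>_. 0"]) (simp add: fin_supp_zero)

setup_lifting type_definition_fp

instantiation fp :: (comm_ring_1) ring_1
begin
lift_definition zero_fp :: "'a fp" is "\<lambda>_. 0" by (rule fin_supp_zero)
lift_definition one_fp :: "'a fp" is "mono []" by (rule fin_supp_mono)
lift_definition plus_fp :: "'a fp \<Rightarrow> 'a fp \<Rightarrow> 'a fp" is "\<lambda>f h w. f w + h w" by (rule fin_supp_add)
lift_definition minus_fp :: "'a fp \<Rightarrow> 'a fp \<Rightarrow> 'a fp" is "\<lambda>f h w. f w - h w" by (rule fin_supp_diff)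
lift_definition uminus_fp :: "'a fp \<Rightarrow> 'a fp" is "\<lambda>f w. - f w" by (rule fin_supp_uminus)
lift_definition times_fp :: "'a fp \<Rightarrow> 'a fp \<Rightarrow> 'a fp" is pmul by (rule fin_supp_pmul)
instance
proof
  fix a b c :: "'a fp"
  show "a + b + c = a + (b + c)" by transfer (simp add: add.assoc)
  show "a + b = b + a" by transfer (simp add: add.commute)
  show "0 + a = a" by transfer simp
  show "- a + a = 0" by transfer simp
  show "a - b = a + - b" by transfer simp
  show "a * b * c = a * (b * c)" by transfer (rule pmul_assoc)
  show "1 * a = a" by transfer (rule pmul_mono_Nil_left)
  show "a * 1 = a" by transfer (rule pmul_mono_Nil_right)
  show "(a + b) * c = a * c + b * c" by transfer (simp add: pmul_def distrib_right sum.distrib)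
  show "a * (b + c) = a * b + a * c" by transfer (simp add: pmul_def distrib_left sum.distrib)
  show "(0::'a fp) \<noteq> 1" by transfer (auto simp: mono_def fun_eq_iff)
qed
end

lift_definition smult :: "'k::comm_ring_1 \<Rightarrow> 'k fp \<Rightarrow> 'k fp" is "\<lambda>c f w. c * f w" by (rule fin_supp_smult)
lift_definition mp :: "nat list \<Rightarrow> 'k::comm_ring_1 fp" is mono by (rule fin_supp_mono)

lemma smult_mult_left[simp]: "smult c x * y = smult c (x * y)"
  by transfer (simp add: pmul_def sum_distrib_left mult.assoc)
lemma smult_mult_right[simp]: "x * smult c y = smult c (x * y)"
  by transfer (simp add: pmul_def sum_distrib_left mult.left_commute)
lemma smult_smult[simp]: "smult a (smult b x) = smult (a * b) x"
  by transfer (simp add: mult.assoc)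
lemma smult_add_right[simp]: "smult a (x + y) = smult a x + smult a y"
  by transfer (simp add: distrib_left)
lemma smult_diff_right[simp]: "smult a (x - y) = smult a x - smult a y"
  by transfer (simp add: right_diff_distrib)
lemma smult_minus_right[simp]: "smult a (- x) = - smult a x"
  by transfer simp
lemma smult_one[simp]: "smult 1 x = x"
  by transfer simp
lemma smult_zero_right[simp]: "smult a 0 = 0"
  by transfer simp
lemma smult_add_left: "smult (a + b) x = smult a x + smult b x"
  by transfer (simp add: distrib_right)
lemma mp_mult: "mp u * mp v = mp (u @ v)"
  by transfer (rule pmul_mono_mono)
lemma rep_add[simp]: "rep (x + y) w = rep x w + rep y w" by transfer simp
lemma rep_diff[simp]: "rep (x - y) w = rep x w - rep y w" by transfer simp
lemma rep_uminus[simp]: "rep (- x) w = - rep x w" by transfer simp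
lemma rep_smult[simp]: "rep (smult c x) w = c * rep x w" by transfer simp
lemma rep_mp[simp]: "rep (mp u) w = (if w = u then 1 else 0)" by transfer (simp add: mono_def)
lemma rep_zero[simp]: "rep 0 w = 0" by transfer simp




lemma id1: fixes u v w :: "'k::comm_ring_1 fp" shows
 "(u*v - smult a (v*u))*w - smult (b*c) (w*(u*v - smult a (v*u))) - (u*(v*w - smult c (w*v)) - smult (a*b) ((v*w - smult c (w*v))*u)) = smult c ((u*w - smult b (w*u))*v) - smult a (v*(u*w - smult b (w*u)))"
  by (simp add: algebra_simps mult.assoc mult_ac)

lemma id2R: fixes u v w :: "'k::comm_ring_1 fp" shows
 "(u*v - smult a (v*u))*w - smult (b*c) (w*(u*v - smult a (v*u))) =
   u*(v*w - smult c (w*v)) + smult c ((u*w - smult b (w*u))*v) - smult a (v*(u*w - smult b (w*u)) + smult b ((v*w - smult c (w*v))*u))"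
  by (simp add: algebra_simps mult.assoc mult_ac)

lemma id2L: fixes u v w :: "'k::comm_ring_1 fp" shows
 "u*(v*w - smult c (w*v)) - smult (a*b) ((v*w - smult c (w*v))*u) =
   (u*v - smult a (v*u))*w + smult a (v*(u*w - smult b (w*u))) - smult c ((u*w - smult b (w*u))*v + smult b (w*(u*v - smult a (v*u))))"
  by (simp add: algebra_simps mult.assoc mult_ac)




fun bv :: "(nat \<Rightarrow> 'g::ab_group_add \<Rightarrow> 'k::field) \<Rightarrow> (nat \<Rightarrow> 'g) \<Rightarrow> nat btree \<Rightarrow> 'k fp" where
  "bv chi g (Lf i) = mp [i]"
| "bv chi g (Br s t) = bv chi g s * bv chi g t - smult (pp chi g (leaves s) (leaves t)) (bv chi g t * bv chi g s)"

lemma rep_bv: "rep (bv chi g T) = bval chi g T"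
  by (induction T) (simp_all add: mp.rep_eq minus_fp.rep_eq times_fp.rep_eq smult.rep_eq)

declare bv.simps(2)[simp del]

lemma pmul_zero_right: "pmul c (\<lambda>_. 0) = (\<lambda>_. 0 :: 'k::semiring_0)"
  by (simp add: pmul_def fun_eq_iff)

lemma pmul_add_right: "pmul c (\<lambda>w. x w + y w) = (\<lambda>w. pmul c x w + pmul c y w :: 'k::semiring_0)"
  by (simp add: pmul_def fun_eq_iff distrib_left sum.distrib)

lemma pmul_add_left: "pmul (\<lambda>w. x w + y w) c = (\<lambda>w. pmul x c w + pmul y c w :: 'k::semiring_0)"
  by (simp add: pmul_def fun_eq_iff distrib_right sum.distrib)

lemma pmul_zero_left: "pmul (\<lambda>_. 0) c = (\<lambda>_. 0 :: 'k::semiring_0)"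
  by (simp add: pmul_def fun_eq_iff)

lemma pmul_smult_left: "pmul (\<lambda>w. s * a w) r = (\<lambda>w. s * pmul a r w :: 'k::comm_semiring_0)"
  by (simp add: pmul_def fun_eq_iff sum_distrib_left mult.assoc)

lemma ideal_left:
  assumes "x \<in> ideal_gen R" "fin_supp c" shows "pmul c x \<in> ideal_gen R"
  using assms(1)
proof induction
  case zero then show ?case by (simp add: pmul_zero_right ideal_gen.zero)
next
  case (gen r a b)
  have "pmul c (pmul (pmul a r) b) = pmul (pmul (pmul c a) r) b" by (simp add: pmul_assoc)
  then show ?case using gen assms(2) by (simp add: ideal_gen.gen fin_supp_pmul)
next
  case (add x y) then show ?case by (simp add: pmul_add_right ideal_gen.add)
qed

lemma ideal_right:
  assumes "x \<in> ideal_gen R" "fin_supp c" shows "pmul x c \<in> ideal_gen R"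
  using assms(1)
proof induction
  case zero then show ?case by (simp add: pmul_zero_left ideal_gen.zero)
next
  case (gen r a b)
  have "pmul (pmul (pmul a r) b) c = pmul (pmul a r) (pmul b c)" by (simp add: pmul_assoc)
  then show ?case using gen assms(2) by (simp add: ideal_gen.gen fin_supp_pmul)
next
  case (add x y) then show ?case by (simp add: pmul_add_left ideal_gen.add)
qed

lemma ideal_smult:
  assumes "x \<in> ideal_gen R" shows "(\<lambda>w. s * x w) \<in> ideal_gen R"
  using assms
proof induction
  case zero then show ?case by (simp add: ideal_gen.zero)
next
  case (gen r a b)
  have "(\<lambda>w. s * pmul (pmul a r) b w) = pmul (pmul (\<lambda>w. s * a w) r) b" by (simp add: pmul_smult_left)
  then show ?case using gen by (simp add: ideal_gen.gen fin_supp_smult)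
next
  case (add x y)
  have "(\<lambda>w. s * (x w + y w)) = (\<lambda>w. (s * x w) + (s * y w))" by (simp add: distrib_left)
  then show ?case using add by (simp add: ideal_gen.add)
qed

lemma ideal_base: assumes "(r::'k::comm_ring_1 ncpoly) \<in> R" "fin_supp r" shows "r \<in> ideal_gen R"
proof -
  have "pmul (pmul (mono []) r) (mono []) \<in> ideal_gen R"
    by (rule ideal_gen.gen[OF assms(1) fin_supp_mono fin_supp_mono])
  then show ?thesis by (simp add: pmul_mono_Nil_left pmul_mono_Nil_right)
qed

definition inJ :: "'k::comm_ring_1 ncpoly set \<Rightarrow> 'k fp \<Rightarrow> bool" where
  "inJ R x \<longleftrightarrow> rep x \<in> ideal_gen R"

lemma inJ_0: "inJ R 0"
  unfolding inJ_def zero_fp.rep_eq by (rule ideal_gen.zero)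
lemma inJ_add: "inJ R x \<Longrightarrow> inJ R y \<Longrightarrow> inJ R (x + y)"
  unfolding inJ_def plus_fp.rep_eq by (rule ideal_gen.add)
lemma inJ_smult: "inJ R x \<Longrightarrow> inJ R (smult s x)"
  unfolding inJ_def smult.rep_eq by (rule ideal_smult)
lemma inJ_uminus: "inJ R x \<Longrightarrow> inJ R (- x)"
proof -
  assume "inJ R x"
  then have "inJ R (smult (-1) x)" by (rule inJ_smult)
  moreover have "smult (-1) x = - x" by transfer simp
  ultimately show ?thesis by simp
qed
lemma inJ_diff: "inJ R x \<Longrightarrow> inJ R y \<Longrightarrow> inJ R (x - y)"
  using inJ_add[of R x "- y"] inJ_uminus[of R y] by simp
lemma inJ_mult_left: "inJ R x \<Longrightarrow> inJ R (y * x)"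
  unfolding inJ_def times_fp.rep_eq using rep by (auto intro: ideal_left)
lemma inJ_mult_right: "inJ R x \<Longrightarrow> inJ R (x * y)"
  unfolding inJ_def times_fp.rep_eq using rep by (auto intro: ideal_right)

locale setting =
  fixes chi :: "nat \<Rightarrow> 'g::ab_group_add \<Rightarrow> 'k::field" and g :: "nat \<Rightarrow> 'g" and n :: nat
  assumes chi_hom: "\<And>i a b. chi i (a + b) = chi i a * chi i b"
    and chi_nz: "\<And>i a. chi i a \<noteq> 0"
begin

abbreviation "RR \<equiv> bval chi g ` sp_rel_trees n"
abbreviation "J \<equiv> inJ RR"
abbreviation "B \<equiv> bv chi g"
definition cg :: "'k fp \<Rightarrow> 'k fp \<Rightarrow> bool" where "cg x y \<longleftrightarrow> J (x - y)"

lemma chi_0: "chi i 0 = 1"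
  using chi_hom[of i 0 0] chi_nz[of i 0] by simp

lemma chi_sum: "chi i (\<Sum>j\<leftarrow>v. g j) = (\<Prod>j\<leftarrow>v. chi i (g j))"
  by (induction v) (simp_all add: chi_0 chi_hom)

lemma pp_eq: "pp chi g u v = (\<Prod>i\<leftarrow>u. \<Prod>j\<leftarrow>v. chi i (g j))"
  unfolding pp_def by (simp add: chi_sum)

lemma pp_append_left: "pp chi g (u @ u') v = pp chi g u v * pp chi g u' v"
  unfolding pp_def by simp

lemma prod_list_map_mult: "(\<Prod>x\<leftarrow>xs. f x * h x) = (\<Prod>x\<leftarrow>xs. f x) * (\<Prod>x\<leftarrow>xs. (h x :: 'k))"
  by (induction xs) (simp_all add: mult_ac)

lemma pp_append_right: "pp chi g u (v @ v') = pp chi g u v * pp chi g u v'"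
  unfolding pp_def by (simp add: chi_hom prod_list_map_mult)

lemma pp_nz: "pp chi g u v \<noteq> 0"
  unfolding pp_def by (induction u) (simp_all add: chi_nz)

lemma rel_J: "T \<in> sp_rel_trees n \<Longrightarrow> J (B T)"
  unfolding inJ_def rep_bv by (rule ideal_base) (auto simp: rep_bv[symmetric] rep[simplified])

lemma cg_refl: "cg x x" unfolding cg_def by (simp add: inJ_0)
lemma cg_sym: "cg x y \<Longrightarrow> cg y x"
  unfolding cg_def using inJ_uminus[of RR "x - y"] by simp
lemma cg_trans: "cg x y \<Longrightarrow> cg y z \<Longrightarrow> cg x z"
  unfolding cg_def using inJ_add[of RR "x - y" "y - z"] by simp
lemma cg_J: "cg x y \<Longrightarrow> J x \<Longrightarrow> J y"
  unfolding cg_def using inJ_diff[of RR x "x - y"] by simp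

lemma L1:
  assumes "J (B (Br U W))"
  shows "cg (B (Br (Br U V) W)) (B (Br U (Br V W)))"
proof -
  let ?u = "B U" and ?v = "B V" and ?w = "B W"
  let ?a = "pp chi g (leaves U) (leaves V)" and ?b = "pp chi g (leaves U) (leaves W)"
    and ?c = "pp chi g (leaves V) (leaves W)"
  have "B (Br (Br U V) W) - B (Br U (Br V W)) = smult ?c (B (Br U W) * ?v) - smult ?a (?v * B (Br U W))"
    by (simp add: bv.simps pp_append_left pp_append_right id1)
  moreover have "J (smult ?c (B (Br U W) * ?v) - smult ?a (?v * B (Br U W)))"
    by (intro inJ_diff inJ_smult inJ_mult_right[OF assms] inJ_mult_left[OF assms])
  ultimately show ?thesis unfolding cg_def by simp
qed

lemma L2R:
  assumes "J (B (Br U W))" "J (B (Br V W))"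
  shows "J (B (Br (Br U V) W))"
proof -
  let ?u = "B U" and ?v = "B V" and ?w = "B W"
  let ?a = "pp chi g (leaves U) (leaves V)" and ?b = "pp chi g (leaves U) (leaves W)"
    and ?c = "pp chi g (leaves V) (leaves W)"
  have "B (Br (Br U V) W) = ?u * B (Br V W) + smult ?c (B (Br U W) * ?v) - smult ?a (?v * B (Br U W) + smult ?b (B (Br V W) * ?u))"
    by (simp add: bv.simps pp_append_left pp_append_right id2R)
  moreover have "J (?u * B (Br V W) + smult ?c (B (Br U W) * ?v) - smult ?a (?v * B (Br U W) + smult ?b (B (Br V W) * ?u)))"
    by (intro inJ_diff inJ_add inJ_smult inJ_mult_right[OF assms(1)] inJ_mult_left[OF assms(1)]
       inJ_mult_right[OF assms(2)] inJ_mult_left[OF assms(2)])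
  ultimately show ?thesis by simp
qed

lemma L2L:
  assumes "J (B (Br U V))" "J (B (Br U W))"
  shows "J (B (Br U (Br V W)))"
proof -
  let ?u = "B U" and ?v = "B V" and ?w = "B W"
  let ?a = "pp chi g (leaves U) (leaves V)" and ?b = "pp chi g (leaves U) (leaves W)"
    and ?c = "pp chi g (leaves V) (leaves W)"
  have "B (Br U (Br V W)) = B (Br U V) * ?w + smult ?a (?v * B (Br U W)) - smult ?c (B (Br U W) * ?v + smult ?b (?w * B (Br U V)))"
    by (simp add: bv.simps pp_append_left pp_append_right id2L)
  moreover have "J (B (Br U V) * ?w + smult ?a (?v * B (Br U W)) - smult ?c (B (Br U W) * ?v + smult ?b (?w * B (Br U V))))"
    by (intro inJ_diff inJ_add inJ_smult inJ_mult_right[OF assms(1)] inJ_mult_left[OF assms(1)]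
       inJ_mult_right[OF assms(2)] inJ_mult_left[OF assms(2)])
  ultimately show ?thesis by simp
qed

lemma congL:
  assumes "cg (B A) (B A')" "leaves A = leaves A'"
  shows "cg (B (Br A C)) (B (Br A' C))"
proof -
  have "B (Br A C) - B (Br A' C) = (B A - B A') * B C - smult (pp chi g (leaves A) (leaves C)) (B C * (B A - B A'))"
    using assms(2) by (simp add: bv.simps algebra_simps)
  then show ?thesis using assms(1) unfolding cg_def
    by (simp add: inJ_diff inJ_smult inJ_mult_left inJ_mult_right)
qed

lemma congR:
  assumes "cg (B A) (B A')" "leaves A = leaves A'"
  shows "cg (B (Br C A)) (B (Br C A'))"
proof -
  have "B (Br C A) - B (Br C A') = B C * (B A - B A') - smult (pp chi g (leaves C) (leaves A)) ((B A - B A') * B C)"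
    using assms(2) by (simp add: bv.simps algebra_simps)
  then show ?thesis using assms(1) unfolding cg_def
    by (simp add: inJ_diff inJ_smult inJ_mult_left inJ_mult_right)
qed

lemma swap:
  assumes "J (B (Br b a))" "pp chi g (leaves a) (leaves b) * pp chi g (leaves b) (leaves a) = 1"
  shows "J (B (Br a b))"
proof -
  let ?e = "pp chi g (leaves a) (leaves b)" and ?f = "pp chi g (leaves b) (leaves a)"
  have "- smult ?e (B (Br b a)) = smult (?e * ?f) (B a * B b) - smult ?e (B b * B a)"
    by (simp add: bv.simps algebra_simps)
  then have eq: "B (Br a b) = - smult ?e (B (Br b a))"
    unfolding assms(2) by (simp add: bv.simps)
  show ?thesis unfolding eq by (intro inJ_uminus inJ_smult assms(1))
qed

end



definition lnorm :: "'a list \<Rightarrow> 'a btree" where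
  "lnorm xs = foldl (\<lambda>t y. Br t (Lf y)) (Lf (hd xs)) (tl xs)"

lemma lnorm_snoc: "xs \<noteq> [] \<Longrightarrow> lnorm (xs @ [y]) = Br (lnorm xs) (Lf y)"
  by (cases xs) (simp_all add: lnorm_def)

lemma lnorm_single: "lnorm [x] = Lf x" by (simp add: lnorm_def)

lemma leaves_lnorm: "xs \<noteq> [] \<Longrightarrow> leaves (lnorm xs) = xs"
proof (induction xs rule: rev_induct)
  case (snoc x xs) then show ?case by (cases "xs = []") (auto simp: lnorm_snoc lnorm_single)
qed simp

lemma leaves_ne: "leaves T \<noteq> []"
  by (induction T) auto

lemma leaves_subst: "leaves (subst_tree T) = concat (map leaves (leaves T))"
  by (induction T) auto

lemma length_leaves: "size T + 1 = 2 * length (leaves T)"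
  by (induction T) auto

fun rs :: "'a btree \<Rightarrow> nat" where
  "rs (Lf _) = 0" | "rs (Br _ r) = size r"

context setting begin

definition PP :: "nat btree list \<Rightarrow> bool" where
  "PP xs \<longleftrightarrow> (\<forall>i j. i + 1 < j \<longrightarrow> j < length xs \<longrightarrow> J (B (Br (xs!i) (xs!j))))"

lemma PP_prefix: "PP (xs @ ys) \<Longrightarrow> PP xs"
  unfolding PP_def
proof (intro allI impI)
  fix i j assume a: "\<forall>i j. i + 1 < j \<longrightarrow> j < length (xs @ ys) \<longrightarrow> J (B (Br ((xs @ ys) ! i) ((xs @ ys) ! j)))"
    and "i + 1 < j" "j < length xs"
  then show "J (B (Br (xs ! i) (xs ! j)))" using a[rule_format, of i j] by (simp add: nth_append)
qed

lemma PP_far: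
  assumes "PP (A @ M @ C)" "M \<noteq> []" "x \<in> set A" "y \<in> set C"
  shows "J (B (Br x y))"
proof -
  obtain i where i: "i < length A" "A ! i = x" using assms(3) by (auto simp: in_set_conv_nth)
  obtain j where j: "j < length C" "C ! j = y" using assms(4) by (auto simp: in_set_conv_nth)
  let ?j = "length A + length M + j"
  have "(A @ M @ C) ! i = x" using i by (simp add: nth_append)
  moreover have "(A @ M @ C) ! ?j = y" using j by (simp add: nth_append)
  moreover have "i + 1 < ?j" using i assms(2) by (cases M) auto
  moreover have "?j < length (A @ M @ C)" using j by simp
  ultimately show ?thesis using assms(1) unfolding PP_def by metis
qed

lemma far_Lf:
  assumes "\<forall>y\<in>set (leaves Y). J (B (Br x y))"
  shows "J (B (Br x (subst_tree Y)))"
  using assms by (induction Y) (auto intro: L2L)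

lemma far_trees:
  assumes "\<forall>x\<in>set (leaves X). \<forall>y\<in>set (leaves Y). J (B (Br x y))"
  shows "J (B (Br (subst_tree X) (subst_tree Y)))"
  using assms by (induction X) (auto intro: L2R far_Lf)

lemma to_lnorm:
  "PP (leaves T) \<Longrightarrow> cg (B (subst_tree T)) (B (subst_tree (lnorm (leaves T))))"
proof (induction T rule: measure_induct_rule[where f="\<lambda>T. length (leaves T) * length (leaves T) + rs T"])
  case (less T)
  show ?case
  proof (cases T)
    case (Lf x)
    then show ?thesis by (simp add: lnorm_single cg_refl)
  next
    case (Br T1 T2)
    show ?thesis
    proof (cases T2)
      case (Lf b)
      have P1: "PP (leaves T1)" using less.prems Br Lf by (auto intro: PP_prefix)
      have lt: "length (leaves T1) * length (leaves T1) + rs T1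
          < length (leaves T) * length (leaves T) + rs T"
      proof -
        have "rs T1 \<le> size T1" by (cases T1) auto
        also have "size T1 < 2 * length (leaves T1)" using length_leaves[of T1] by simp
        finally have "rs T1 < 2 * length (leaves T1)" .
        then show ?thesis using Br Lf by (simp add: algebra_simps)
      qed
      have IH: "cg (B (subst_tree T1)) (B (subst_tree (lnorm (leaves T1))))"
        using less.IH[OF lt P1] .
      have eqL: "leaves (subst_tree T1) = leaves (subst_tree (lnorm (leaves T1)))"
        by (simp add: leaves_subst leaves_lnorm leaves_ne)
      have "subst_tree (lnorm (leaves T)) = Br (subst_tree (lnorm (leaves T1))) b"
        using Br Lf by (simp add: lnorm_snoc leaves_ne)
      then show ?thesis using congL[OF IH eqL, of b] Br Lf by simp
    next
      case (Br B1 B2)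
      note BrT = \<open>T = Br T1 T2\<close>
      let ?T' = "Br (Br T1 B1) B2"
      have lv: "leaves ?T' = leaves T" using BrT Br by simp
      have lt: "length (leaves ?T') * length (leaves ?T') + rs ?T'
          < length (leaves T) * length (leaves T) + rs T"
        using BrT Br lv by simp
      have IH: "cg (B (subst_tree ?T')) (B (subst_tree (lnorm (leaves ?T'))))"
        using less.IH[OF lt] less.prems lv by simp
      have far: "J (B (Br (subst_tree T1) (subst_tree B2)))"
      proof (rule far_trees, intro ballI)
        fix x y assume "x \<in> set (leaves T1)" "y \<in> set (leaves B2)"
        moreover have "PP (leaves T1 @ leaves B1 @ leaves B2)" using less.prems BrT Br by simp
        ultimately show "J (B (Br x y))" using PP_far leaves_ne by blast
      qed
      have "cg (B (subst_tree ?T')) (B (subst_tree T))"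
        using L1[OF far, of "subst_tree B1"] BrT Br by simp
      then show ?thesis using IH lv cg_sym cg_trans by metis
    qed
  qed
qed

lemma indep:
  assumes "PP xs" "leaves T1 = xs" "leaves T2 = xs"
  shows "cg (B (subst_tree T1)) (B (subst_tree T2))"
  using to_lnorm[of T1] to_lnorm[of T2] assms cg_sym cg_trans by metis

end



locale sp = setting chi g n for chi :: "nat \<Rightarrow> 'g::ab_group_add \<Rightarrow> 'k::field" and g n +
  fixes q :: 'k
  assumes n2: "2 \<le> n" and q_nz: "q \<noteq> 0" and qm1: "q \<noteq> -1"
    and p_ii: "\<And>i. 1 \<le> i \<Longrightarrow> i < n \<Longrightarrow> chi i (g i) = q"
    and p_adj: "\<And>i. 1 < i \<Longrightarrow> i < n \<Longrightarrow> chi i (g (i-1)) * chi (i-1) (g i) = inverse q"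
    and p_far: "\<And>i j. 1 \<le> i \<Longrightarrow> i + 1 < j \<Longrightarrow> j \<le> n \<Longrightarrow> chi i (g j) * chi j (g i) = 1"
begin

lemma rel_far: "1 \<le> i \<Longrightarrow> i + 1 < j \<Longrightarrow> j \<le> n \<Longrightarrow> J (B (Br (Lf i) (Lf j)))"
  by (rule rel_J) (auto simp: sp_rel_trees_def)

lemma far_swap: "1 \<le> i \<Longrightarrow> i + 1 < j \<Longrightarrow> j \<le> n \<Longrightarrow> J (B (Br (Lf j) (Lf i)))"
  by (rule swap[OF rel_far]) (auto simp: pp_eq mult.commute p_far)

lemma rel_A1: "1 \<le> i \<Longrightarrow> i + 1 < n \<Longrightarrow> J (B (Br (Br (Lf i) (Lf (i+1))) (Lf (i+1))))"
  by (rule rel_J) (auto simp: sp_rel_trees_def)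

lemma rel_A2: "1 \<le> i \<Longrightarrow> i + 1 < n \<Longrightarrow> J (B (Br (Lf i) (Br (Lf i) (Lf (i+1)))))"
  by (rule rel_J) (auto simp: sp_rel_trees_def)

lemma core:
  assumes c1: "1 \<le> c" and c3: "c + 3 \<le> n"
  shows "J (B (Br (Br (Br (Lf c) (Lf (c+1))) (Lf (c+2))) (Lf (c+1))))"
proof -
  let ?x = "mp [c] :: 'k fp" and ?a = "mp [c+1] :: 'k fp" and ?b = "mp [c+2] :: 'k fp"
  let ?R1 = "B (Br (Br (Lf c) (Lf (c+1))) (Lf (c+1)))"
  let ?R2 = "B (Br (Lf (c+1)) (Br (Lf (c+1)) (Lf (c+2))))"
  let ?R3 = "B (Br (Lf c) (Lf (c+2)))"
  define u where "u = chi c (g (c+1))"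
  define t where "t = chi (c+1) (g (c+2))"
  define r where "r = chi c (g (c+2))"
  have u0: "u \<noteq> 0" and t0: "t \<noteq> 0" and r0: "r \<noteq> 0" using chi_nz by (auto simp: u_def t_def r_def)
  have q1: "1 + q \<noteq> 0" using qm1 by (metis add.commute add_eq_0_iff)
  have tq: "t + q * t \<noteq> 0" using q1 t0 by (metis distrib_right mult_1 no_zero_divisors)
  have e1: "chi c (g c) = q" using p_ii c1 c3 by simp
  have e2: "chi (Suc c) (g (Suc c)) = q" using p_ii c1 c3 by simp
  have e3: "chi (Suc (Suc c)) (g (Suc (Suc c))) = q" using p_ii c1 c3 by simp
  have e4: "chi (Suc c) (g c) = inverse q / u"
    using p_adj[of "Suc c"] c1 c3 u0 q_nz unfolding u_def by (simp add: field_simps)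
  have e5: "chi (Suc (Suc c)) (g (Suc c)) = inverse q / t"
    using p_adj[of "Suc (Suc c)"] c1 c3 t0 q_nz unfolding t_def by (simp add: field_simps)
  have e6: "chi (Suc (Suc c)) (g c) = 1 / r"
    using p_far[of c "Suc (Suc c)"] c1 c3 r0 unfolding r_def by (simp add: field_simps)
  have u': "chi c (g (Suc c)) = u" and t': "chi (Suc c) (g (Suc (Suc c))) = t" and r': "chi c (g (Suc (Suc c))) = r"
    by (simp_all add: u_def t_def r_def)
  have eq: "smult ((1+q)*t) (B (Br (Br (Br (Lf c) (Lf (c+1))) (Lf (c+2))) (Lf (c+1)))) =
      (?R1 * ?b) + smult (-t*t*r) (?b * ?R1)
    + smult (u*u*r) (?R2 * ?x) + smult (-1) (?x * ?R2)
    + smult (q*t*t) (?R3 * ?a * ?a) + smult (-u*(1+q)*t) (?a * ?R3 * ?a)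
    + smult (u*u) (?a * ?a * ?R3)"
    apply (simp add: bv.simps pp_eq algebra_simps mp_mult e1 e2 e3 e4 e5 e6 u' t' r' u0 t0 r0 q1 q_nz)
    apply (rule rep_inject[THEN iffD1], rule ext)
    apply (simp split: if_split)
    apply (simp add: field_simps u0 t0 r0 q1 q_nz tq)
    done
  have hR1: "J ?R1" using rel_A1[of c] c1 c3 by simp
  have hR2: "J ?R2" using rel_A2[of "c+1"] c1 c3 by simp
  have hR3: "J ?R3" using rel_far[of c "c+2"] c1 c3 by simp
  have t1: "J (?R1 * ?b)" by (rule inJ_mult_right[OF hR1])
  have t2: "J (smult (-t*t*r) (?b * ?R1))" by (rule inJ_smult, rule inJ_mult_left[OF hR1])
  have t3: "J (smult (u*u*r) (?R2 * ?x))" by (rule inJ_smult, rule inJ_mult_right[OF hR2])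
  have t4: "J (smult (-1) (?x * ?R2))" by (rule inJ_smult, rule inJ_mult_left[OF hR2])
  have t5: "J (smult (q*t*t) (?R3 * ?a * ?a))" by (rule inJ_smult, rule inJ_mult_right, rule inJ_mult_right[OF hR3])
  have t6: "J (smult (-u*(1+q)*t) (?a * ?R3 * ?a))" by (rule inJ_smult, rule inJ_mult_right, rule inJ_mult_left[OF hR3])
  have t7: "J (smult (u*u) (?a * ?a * ?R3))" by (rule inJ_smult, rule inJ_mult_left[OF hR3])
  have "J (smult ((1+q)*t) (B (Br (Br (Br (Lf c) (Lf (c+1))) (Lf (c+2))) (Lf (c+1)))))"
    unfolding eq by (intro inJ_add t1 t2 t3 t4 t5 t6 t7)
  then have "J (smult (inverse ((1+q)*t)) (smult ((1+q)*t) (B (Br (Br (Br (Lf c) (Lf (c+1))) (Lf (c+2))) (Lf (c+1))))))"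
    by (rule inJ_smult)
  moreover have "inverse ((1+q)*t) * ((1+q)*t) = 1" by (intro left_inverse) (simp add: q1 t0)
  ultimately show ?thesis by simp
qed

lemma v_tree_same: "v_tree k k = Lf k"
  by (simp add: v_tree_def)

lemma v_tree_Suc: "k \<le> l \<Longrightarrow> v_tree k (Suc l) = Br (v_tree k l) (Lf (Suc l))"
  by (simp add: v_tree_def)

lemma leaves_v_tree: "k \<le> l \<Longrightarrow> leaves (v_tree k l) = [k..<Suc l]"
proof (induction l)
  case 0 then show ?case by (simp add: v_tree_same)
next
  case (Suc l)
  show ?case
  proof (cases "k = Suc l")
    case True then show ?thesis by (simp add: v_tree_same)
  next
    case False then show ?thesis using Suc by (simp add: v_tree_Suc)
  qed
qed

lemma transferJ:
  assumes "cg (B X) (B X')" "leaves X = leaves X'" "J (B (Br X Y))"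
  shows "J (B (Br X' Y))"
  using cg_J[OF congL[OF assms(1,2)] assms(3)] .

lemma far_v: "1 \<le> k \<Longrightarrow> k \<le> l \<Longrightarrow> l + 2 \<le> j \<Longrightarrow> j \<le> n \<Longrightarrow> J (B (Br (v_tree k l) (Lf j)))"
proof (induction l)
  case 0 then show ?case by simp
next
  case (Suc l)
  show ?case
  proof (cases "k = Suc l")
    case True then show ?thesis using Suc.prems by (simp add: v_tree_same rel_far)
  next
    case False
    then have "J (B (Br (v_tree k l) (Lf j)))" using Suc by simp
    moreover have "J (B (Br (Lf (Suc l)) (Lf j)))" using Suc.prems by (intro rel_far) auto
    ultimately show ?thesis using False Suc.prems by (simp add: v_tree_Suc L2R)
  qed
qed

lemma typeA_eq:
  assumes "1 \<le> k" "k < l" "l < n"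
  shows "J (B (Br (v_tree k l) (Lf l)))"
proof (cases "l = k + 1")
  case True
  then show ?thesis using rel_A1[of k] assms by (simp add: v_tree_Suc v_tree_same)
next
  case False
  define m where "m = l - 2"
  have m: "l = m + 2" "k \<le> m" using False assms by (auto simp: m_def)
  let ?D = "v_tree k m" and ?c = "Lf (m+1)" and ?a = "Lf (m+2)"
  have vt: "v_tree k l = Br (Br ?D ?c) ?a" using m by (simp add: v_tree_Suc)
  have fD: "J (B (Br ?D ?a))" using far_v[of k m "m+2"] m assms by simp
  have s1: "cg (B (Br (Br ?D ?c) ?a)) (B (Br ?D (Br ?c ?a)))" by (rule L1[OF fD])
  have "J (B (Br (Br ?c ?a) ?a))" using rel_A1[of "m+1"] m assms by simp
  then have "J (B (Br (Br ?D (Br ?c ?a)) ?a))" using fD by (simp add: L2R)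
  then show ?thesis unfolding vt using transferJ[OF cg_sym[OF s1]] m by simp
qed

lemma typeA_m1:
  assumes "1 \<le> k" "k < j" "j + 1 < n"
  shows "J (B (Br (v_tree k (j+1)) (Lf j)))"
proof (cases "j = k + 1")
  case True
  then show ?thesis using core[of k] assms by (simp add: v_tree_Suc v_tree_same)
next
  case False
  define m where "m = j - 2"
  have m: "j = m + 2" "k \<le> m" using False assms by (auto simp: m_def)
  let ?D = "v_tree k m" and ?c = "Lf (m+1)" and ?a = "Lf (m+2)" and ?b = "Lf (m+3)"
  have vt: "v_tree k (j+1) = Br (Br (Br ?D ?c) ?a) ?b" using m by (simp add: v_tree_Suc)
  have fa: "J (B (Br ?D ?a))" using far_v[of k m "m+2"] m assms by simp
  have fb: "J (B (Br ?D ?b))" using far_v[of k m "m+3"] m assms by simp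
  have s1: "cg (B (Br (Br ?D ?c) ?a)) (B (Br ?D (Br ?c ?a)))" by (rule L1[OF fa])
  have s2: "cg (B (Br (Br (Br ?D ?c) ?a) ?b)) (B (Br (Br ?D (Br ?c ?a)) ?b))"
    by (rule congL[OF s1]) simp
  have s3: "cg (B (Br (Br ?D (Br ?c ?a)) ?b)) (B (Br ?D (Br (Br ?c ?a) ?b)))" by (rule L1[OF fb])
  have s: "cg (B (Br ?D (Br (Br ?c ?a) ?b))) (B (v_tree k (j+1)))"
    unfolding vt using cg_trans[OF s2 s3] by (rule cg_sym)
  have "J (B (Br (Br (Br ?c ?a) ?b) ?a))" using core[of "m+1"] m assms by (simp add: numeral_eq_Suc)
  then have "J (B (Br (Br ?D (Br (Br ?c ?a) ?b)) ?a))" using fa by (simp add: L2R)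
  then show ?thesis using transferJ[OF s] vt m by simp
qed

lemma typeA: "1 \<le> k \<Longrightarrow> k < j \<Longrightarrow> j \<le> l \<Longrightarrow> l < n \<Longrightarrow> J (B (Br (v_tree k l) (Lf j)))"
proof (induction l arbitrary: j)
  case 0 then show ?case by simp
next
  case (Suc l)
  show ?case
  proof (cases "j + 2 \<le> Suc l")
    case True
    then have "J (B (Br (v_tree k l) (Lf j)))" using Suc by simp
    moreover have "J (B (Br (Lf (Suc l)) (Lf j)))" using Suc.prems True by (intro far_swap) auto
    ultimately show ?thesis using Suc.prems by (simp add: v_tree_Suc L2R)
  next
    case False
    then have "j = Suc l \<or> j + 1 = Suc l" using Suc.prems by auto
    then show ?thesis
    proof
      assume "j = Suc l" then show ?thesis using typeA_eq Suc.prems by simp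
    next
      assume "j + 1 = Suc l" then show ?thesis using typeA_m1[of k j] Suc.prems by simp
    qed
  qed
qed

end



context sp begin

lemma items_nth:
  assumes "k < n" "1 \<le> p" "p < length (items n k m)" "n \<le> m"
  shows "items n k m ! p = Lf (n + 1 - p)"
proof -
  have "items n k m ! p = map (\<lambda>i. Lf (letter n i)) [n..<m+1] ! (p - 1)"
    using assms by (simp add: items_def nth_Cons')
  also have "\<dots> = Lf (letter n (n + (p - 1)))"
  proof -
    have h: "p - 1 < m + 1 - n" using assms by (simp add: items_def)
    then have "[n..<m+1] ! (p - 1) = n + (p - 1)" by (intro nth_upt) simp
    then show ?thesis using h by (simp del: upt_Suc)
  qed
  also have "letter n (n + (p - 1)) = n + 1 - p"
    using assms by (auto simp: letter_def)
  finally show ?thesis .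
qed

lemma PP_items:
  assumes k1: "1 \<le> k" and kn: "k < n" and nm: "n \<le> m" and mk: "m < 2 * n - k"
  shows "PP (items n k m)"
  unfolding PP_def
proof (intro allI impI)
  fix i j assume ij: "i + 1 < j" and jl: "j < length (items n k m)"
  have len: "length (items n k m) = m + 2 - n" using kn nm by (simp add: items_def)
  have xj: "items n k m ! j = Lf (n + 1 - j)" using items_nth[OF kn _ jl nm] ij by simp
  show "J (B (Br (items n k m ! i) (items n k m ! j)))"
  proof (cases "i = 0")
    case True
    then have xi: "items n k m ! i = v_tree k (n - 1)" using kn by (simp add: items_def)
    show ?thesis unfolding xi xj
      by (rule typeA) (use k1 kn nm mk ij jl len True in auto)
  next
    case False
    then have xi: "items n k m ! i = Lf (n + 1 - i)" using items_nth[OF kn _ _ nm] ij jl by simp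
    show ?thesis unfolding xi xj
      by (rule far_swap) (use k1 kn nm mk ij jl len False in auto)
  qed
qed

end

theorem lemma3p4:
  fixes chi :: "nat \<Rightarrow> 'g::ab_group_add \<Rightarrow> 'k::field"
    and g :: "nat \<Rightarrow> 'g" and q :: 'k and n k m :: nat
  assumes chi_hom: "\<And>i a b. chi i (a + b) = chi i a * chi i b"
    and chi_nz: "\<And>i a. chi i a \<noteq> 0"
    and n2: "2 \<le> n"
    and q_nz: "q \<noteq> 0" and q3: "q ^ 3 \<noteq> 1" and qm1: "q \<noteq> -1"
    and p_ii: "\<And>i. 1 \<le> i \<Longrightarrow> i < n \<Longrightarrow> chi i (g i) = q"
    and p_nn: "chi n (g n) = q ^ 2"
    and p_adj: "\<And>i. 1 < i \<Longrightarrow> i < n \<Longrightarrow> chi i (g (i-1)) * chi (i-1) (g i) = inverse q"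
    and p_last: "chi (n-1) (g n) * chi n (g (n-1)) = inverse (q ^ 2)"
    and p_far: "\<And>i j. 1 \<le> i \<Longrightarrow> i + 1 < j \<Longrightarrow> j \<le> n \<Longrightarrow> chi i (g j) * chi j (g i) = 1"
    and k1: "1 \<le> k" and kn: "k \<le> n" and nm: "n \<le> m" and mphi: "m < phi n k"
    and T1: "leaves T1 = items n k m" and T2: "leaves T2 = items n k m"
  shows "(\<lambda>w. bval chi g (subst_tree T1) w - bval chi g (subst_tree T2) w) \<in> Uq_ideal chi g n"
proof -
  interpret sp chi g n q
    by unfold_locales (use chi_hom chi_nz n2 q_nz qm1 p_ii p_adj p_far in auto)
  have kn': "k < n" using kn nm mphi by (auto simp: phi_def)
  have "PP (items n k m)" by (rule PP_items) (use k1 kn' nm mphi in \<open>auto simp: phi_def\<close>)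
  then have "cg (B (subst_tree T1)) (B (subst_tree T2))" by (rule indep[OF _ T1 T2])
  then have "rep (B (subst_tree T1) - B (subst_tree T2)) \<in> ideal_gen RR" by (simp add: cg_def inJ_def)
  then show ?thesis by (simp add: minus_fp.rep_eq rep_bv Uq_ideal_def)
qed

end
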